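(* Consider the problem and algorithm AC2CD described in the context, let $\{x^k\}$ be a sequence produced by AC2CD, and assume $\lim_{k\to\infty}x^k=x^*$, where $x^*$ is a stationary point with multiplier $\lambda^*$ and $\mathcal A^+(x^* )\neq\emptyset$. Let $\zeta(x^* )=\min_{i\in\mathcal A^+(x^* )}|\nabla_i f(x^* )-\lambda^*|>0$. Let $k_A$ be the first outer iteration such that \[ \|z^{k,i}-x^*\|<\frac{\zeta(x^* )}{2L+\max\bigl\{\frac1{A_l},\frac{L^{\max}}{2(1-\gamma)}\bigr\}},\quad i=1,\dots,n,\quad\text{for all }k\ge k_A. \] Let $k_j$ be the first outer iteration such that $j(k)\notin\mathcal A(x^* )$ for all $k\ge k_j$, let $k_z$ be the first outer iteration such that $l_{j(k)}<z^{k,i}_{j(k)}<u_{j(k)}$ for $i=1,\dots,n+1$ and all $k\ge k_z$, and assume $k_A\ge\max\{k_j,k_z\}$. Then for all $k>k_A$, \[ x^k_h=x^*_h\quad\text{for all } h\in\mathcal A^+(x^* ). \]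
   Context: Problem: minimize $f(x)$ subject to $e^T x = b$ and $l_i \le x_i \le u_i$ ($i=1,\dots,n$), where $n\ge 2$, $e$ is the all-ones vector, $b\in\mathbb{R}$, $l_i\in\mathbb{R}\cup\{-\infty\}$, $u_i\in\mathbb{R}\cup\{+\infty\}$, $l_i<u_i$, and $f:\mathbb{R}^n\to\mathbb{R}$ is continuously differentiable with $\nabla f$ Lipschitz continuous on $\mathbb{R}^n$ with constant $L$. $\mathcal F$ is the feasible set, $e_i$ the $i$th unit vector. For $i\ne j$, $L_{i,j}>0$ are fixed constants such that for every $x\in\mathbb{R}^n$ and $s,t\in\mathbb{R}$, $|\nabla f(x+s(e_i-e_j))^T(e_i-e_j)-\nabla f(x+t(e_i-e_j))^T(e_i-e_j)|\le L_{i,j}|s-t|$; $L_{i,i}=0$; $L^{\max}=\max_{i,j}L_{i,j}$. For $x\in\mathcal F$, $D_h(x)=\min\{x_h-l_h,u_h-x_h\}$. A point $x^*\in\mathcal F$ is stationary iff there is $\lambda^*\in\mathbb{R}$ with $\nabla_i f(x^* )\ge\lambda^*$ if $x^*_i=l_i$, $=\lambda^*$ if $l_i<x^*_i<u_i$, $\le\lambda^*$ if $x^*_i=u_i$ (the limit of an AC2CD sequence is stationary under the standing assumptions). Active set $\mathcal A(x^* )=\{i:x^*_i=l_i\}\cup\{i:x^*_i=u_i\}$ and $\mathcal A^+(x^* )=\mathcal A(x^* )\cap\{i:\nabla_if(x^* )\ne\lambda^*\}$. Algorithm AC2CD with parameters $\tau\in(0,1]$, $\gamma,\delta\in(0,1)$,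 $0<A_l\le A_u<\infty$ and starting point $x^0\in\mathcal F$: for $k=0,1,2,\dots$: let $D^k=\max_h D_h(x^k)$; choose $j(k)$ with $D_{j(k)}(x^k)\ge\tau D^k$; choose a permutation $(p^k_1,\dots,p^k_n)$ of $\{1,\dots,n\}$; set $z^{k,1}=x^k$; for $i=1,\dots,n$ (inner iteration $(k,i)$): $g^{k,i}=\nabla_{j(k)}f(z^{k,i})-\nabla_{p^k_i}f(z^{k,i})$, $d^{k,i}=g^{k,i}(e_{p^k_i}-e_{j(k)})$; $\bar\alpha^{k,i}=\min\{u_{p^k_i}-z^{k,i}_{p^k_i},z^{k,i}_{j(k)}-l_{j(k)}\}/g^{k,i}$ if $g^{k,i}>0$, $=\min\{z^{k,i}_{p^k_i}-l_{p^k_i},u_{j(k)}-z^{k,i}_{j(k)}\}/|g^{k,i}|$ if $g^{k,i}<0$, $=0$ if $g^{k,i}=0$; choose $A^{k,i}\in[A_l,A_u]$, set $\Delta^{k,i}=\min\{\bar\alpha^{k,i},A^{k,i}\}$; starting from $\alpha=\Delta^{k,i}$, while $f(z^{k,i}+\alpha d^{k,i})>f(z^{k,i})+\gamma\alpha\nabla f(z^{k,i})^Td^{k,i}$ replace $\alpha$ by $\delta\alpha$; $\alpha^{k,i}$ is the final $\alpha$ and $z^{k,i+1}=z^{k,i}+\alpha^{k,i}d^{k,i}$. Then $x^{k+1}=z^{k,n+1}$. Standing assumptions: $\mathcal L_0=\{x\in\mathcal F: f(x)\le f(x^0)\}$ is nonempty and compact, and every $x\in\mathcal L_0$ has some index $i$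 with $l_i<x_i<u_i$. *)

theory Defs
  imports "HOL-Analysis.Analysis"
begin

text \<open>Vectors live in real^'n (Euclidean norm); bounds are extended reals:
  l i is real or -\<infinity>, u i is real or +\<infinity>.  The gradient of f is given
  as a function grad with (grad x) $ i = nabla_i f(x).\<close>

definition feasible :: "('n::finite \<Rightarrow> ereal) \<Rightarrow> ('n \<Rightarrow> ereal) \<Rightarrow> real \<Rightarrow> real^'n \<Rightarrow> bool" where
  "feasible l u b x \<longleftrightarrow> (\<Sum>i\<in>UNIV. x $ i) = b \<and> (\<forall>i. l i \<le> ereal (x $ i) \<and> ereal (x $ i) \<le> u i)"

definition bdist :: "('n::finite \<Rightarrow> ereal) \<Rightarrow> ('n \<Rightarrow> ereal) \<Rightarrow> real^'n \<Rightarrow> 'n \<Rightarrow> ereal" where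
  "bdist l u x h = min (ereal (x $ h) - l h) (u h - ereal (x $ h))"

definition bdist_max :: "('n::finite \<Rightarrow> ereal) \<Rightarrow> ('n \<Rightarrow> ereal) \<Rightarrow> real^'n \<Rightarrow> ereal" where
  "bdist_max l u x = Max (range (bdist l u x))"

text \<open>Maximum feasible stepsize bar-alpha along g (e_p - e_j) from z (possibly +\<infinity>).\<close>
definition alpha_bar :: "('n::finite \<Rightarrow> ereal) \<Rightarrow> ('n \<Rightarrow> ereal) \<Rightarrow> real^'n \<Rightarrow> 'n \<Rightarrow> 'n \<Rightarrow> real \<Rightarrow> ereal" where
  "alpha_bar l u z jj pp g =
     (if g > 0 then min (u pp - ereal (z $ pp)) (ereal (z $ jj) - l jj) / ereal g
      else if g < 0 then min (ereal (z $ pp) - l pp) (u jj - ereal (z $ jj)) / ereal \<bar>g\<bar>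
      else 0)"

text \<open>The sequences x (outer iterates), z (inner iterates z^{k,i}, i = 1..n+1),
  j (the index j(k)), p (permutations p^k_i, i = 1..n), A (A^{k,i}) and alpha
  (accepted stepsizes alpha^{k,i}) are produced by AC2CD with parameters
  tau, gamma, delta, Al, Au.  The Armijo backtracking loop is expressed by:
  alpha^{k,i} = Delta^{k,i} delta^m with m the least number of reductions for which
  the sufficient decrease condition holds.\<close>
definition ac2cd ::
  "(real^'n::finite \<Rightarrow> real) \<Rightarrow> (real^'n \<Rightarrow> real^'n) \<Rightarrow> ('n \<Rightarrow> ereal) \<Rightarrow> ('n \<Rightarrow> ereal) \<Rightarrow> real \<Rightarrow>
   real \<Rightarrow> real \<Rightarrow> real \<Rightarrow> real \<Rightarrow> real \<Rightarrow>
   (nat \<Rightarrow> real^'n) \<Rightarrow> (nat \<Rightarrow> nat \<Rightarrow> real^'n) \<Rightarrow> (nat \<Rightarrow> 'n) \<Rightarrow> (nat \<Rightarrow> nat \<Rightarrow> 'n) \<Rightarrow>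
   (nat \<Rightarrow> nat \<Rightarrow> real) \<Rightarrow> (nat \<Rightarrow> nat \<Rightarrow> real) \<Rightarrow> bool" where
  "ac2cd f grad l u b tau gamma delta Al Au x z j p A alpha \<longleftrightarrow>
     feasible l u b (x 0) \<and>
     (\<forall>k.
        bdist l u (x k) (j k) \<ge> ereal tau * bdist_max l u (x k) \<and>
        bij_betw (p k) {1..CARD('n)} UNIV \<and>
        z k 1 = x k \<and>
        (\<forall>i\<in>{1..CARD('n)}.
           let g = grad (z k i) $ j k - grad (z k i) $ p k i;
               d = g *\<^sub>R (axis (p k i) 1 - axis (j k) 1);
               Delta = real_of_ereal (min (alpha_bar l u (z k i) (j k) (p k i) g) (ereal (A k i)));
               armijo = (\<lambda>a. f (z k i + a *\<^sub>R d) \<le> f (z k i) + gamma * a * (grad (z k i) \<bullet> d))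
           in A k i \<in> {Al..Au} \<and>
              (\<exists>m::nat. alpha k i = Delta * delta ^ m \<and> armijo (alpha k i) \<and>
                  (\<forall>m'<m. \<not> armijo (Delta * delta ^ m'))) \<and>
              z k (Suc i) = z k i + alpha k i *\<^sub>R d) \<and>
        x (Suc k) = z k (CARD('n) + 1))"

definition stationary :: "(real^'n::finite \<Rightarrow> real^'n) \<Rightarrow> ('n \<Rightarrow> ereal) \<Rightarrow> ('n \<Rightarrow> ereal) \<Rightarrow> real \<Rightarrow> real^'n \<Rightarrow> real \<Rightarrow> bool" where
  "stationary grad l u b xs lam \<longleftrightarrow> feasible l u b xs \<and>
     (\<forall>i. (ereal (xs $ i) = l i \<longrightarrow> grad xs $ i \<ge> lam) \<and>
          (l i < ereal (xs $ i) \<and> ereal (xs $ i) < u i \<longrightarrow> grad xs $ i = lam) \<and>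
          (ereal (xs $ i) = u i \<longrightarrow> grad xs $ i \<le> lam))"

definition active_set :: "('n::finite \<Rightarrow> ereal) \<Rightarrow> ('n \<Rightarrow> ereal) \<Rightarrow> real^'n \<Rightarrow> 'n set" where
  "active_set l u xs = {i. ereal (xs $ i) = l i} \<union> {i. ereal (xs $ i) = u i}"

definition active_plus :: "(real^'n::finite \<Rightarrow> real^'n) \<Rightarrow> ('n \<Rightarrow> ereal) \<Rightarrow> ('n \<Rightarrow> ereal) \<Rightarrow> real^'n \<Rightarrow> real \<Rightarrow> 'n set" where
  "active_plus grad l u xs lam = active_set l u xs \<inter> {i. grad xs $ i \<noteq> lam}"

end

theory Submission
  imports Defs
begin

lemma descent:
  fixes f :: "real^'n::finite \<Rightarrow> real" and grad :: "real^'n \<Rightarrow> real^'n"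
  assumes deriv: "\<forall>y. (f has_derivative (\<lambda>h. grad y \<bullet> h)) (at y)"
    and lip: "\<forall>s t. \<bar>grad (z + s *\<^sub>R v) \<bullet> v - grad (z + t *\<^sub>R v) \<bullet> v\<bar> \<le> M * \<bar>s - t\<bar>"
    and t: "t \<ge> 0"
  shows "f (z + t *\<^sub>R v) \<le> f z + t * (grad z \<bullet> v) + M * t^2 / 2"
proof -
  define psi where "psi s = f (z + s *\<^sub>R v) - f z - s * (grad z \<bullet> v) - M * s^2 / 2" for s
  have D: "DERIV psi s :> (grad (z + s *\<^sub>R v) \<bullet> v - grad z \<bullet> v - M * s)" for s
  proof -
    have 1: "((\<lambda>s. z + s *\<^sub>R v) has_derivative (\<lambda>h. h *\<^sub>R v)) (at s)"
      by (auto intro!: derivative_eq_intros)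
    have 2: "((\<lambda>s. f (z + s *\<^sub>R v)) has_derivative (\<lambda>h. grad (z + s *\<^sub>R v) \<bullet> (h *\<^sub>R v))) (at s)"
      using has_derivative_compose[OF 1 deriv[rule_format]] by (simp add: o_def)
    have 3: "((\<lambda>s. f (z + s *\<^sub>R v)) has_real_derivative (grad (z + s *\<^sub>R v) \<bullet> v)) (at s)"
    proof -
      have e: "(\<lambda>h. grad (z + s *\<^sub>R v) \<bullet> (h *\<^sub>R v)) = (*) (grad (z + s *\<^sub>R v) \<bullet> v)"
        by (rule ext) (simp add: mult.commute)
      show ?thesis using 2 unfolding has_field_derivative_def e .
    qed
    show ?thesis unfolding psi_def
      by (auto intro!: derivative_eq_intros 3)
  qed
  have "psi t \<le> psi 0"
  proof (rule DERIV_nonpos_imp_nonincreasing[OF t])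
    fix s assume s: "0 \<le> s" "s \<le> t"
    have "grad (z + s *\<^sub>R v) \<bullet> v - grad (z + 0 *\<^sub>R v) \<bullet> v \<le> M * \<bar>s - 0\<bar>"
      using lip by (metis abs_le_D1)
    then have "grad (z + s *\<^sub>R v) \<bullet> v - grad z \<bullet> v - M * s \<le> 0" using s by simp
    then show "\<exists>y. DERIV psi s :> y \<and> y \<le> 0" using D by blast
  qed
  then show ?thesis unfolding psi_def by simp
qed

definition inbox :: "('n::finite \<Rightarrow> ereal) \<Rightarrow> ('n \<Rightarrow> ereal) \<Rightarrow> real^'n \<Rightarrow> bool" where
  "inbox l u z \<longleftrightarrow> (\<forall>i. l i \<le> ereal (z $ i) \<and> ereal (z $ i) \<le> u i)"

lemma div_bound:
  fixes U V :: ereal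
  assumes g: "g > 0" and a: "0 \<le> a" and le: "ereal a \<le> min U V / ereal g"
  shows "ereal (a * g) \<le> U \<and> ereal (a * g) \<le> V"
proof -
  have "ereal g * ereal a \<le> min U V" using le ereal_le_divide_pos[of "ereal g" "ereal a" "min U V"] g by simp
  then show ?thesis by (simp add: mult.commute)
qed

lemma e1: "(a::ereal) \<le> ereal x \<Longrightarrow> ereal x - a \<ge> 0" by (cases a) auto
lemma e2: "ereal x \<le> (b::ereal) \<Longrightarrow> b - ereal x \<ge> 0" by (cases b) auto
lemma e3: "0 \<le> (c::ereal) \<Longrightarrow> g > 0 \<Longrightarrow> 0 \<le> c / ereal g" by (cases c) auto

lemma ab_nonneg:
  assumes box: "inbox l u z"
  shows "alpha_bar l u z jj pp g \<ge> 0"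
proof -
  have 1: "u pp - ereal (z $ pp) \<ge> 0" "ereal (z $ jj) - l jj \<ge> 0"
     "ereal (z $ pp) - l pp \<ge> 0" "u jj - ereal (z $ jj) \<ge> 0"
    using box unfolding inbox_def by (auto intro: e1 e2)
  show ?thesis unfolding alpha_bar_def using 1
    by (auto intro!: e3)
qed

lemma e4: "ereal c \<le> b - ereal x \<Longrightarrow> ereal (x + c) \<le> b" by (cases b) auto
lemma e5: "ereal c \<le> ereal x - a \<Longrightarrow> a \<le> ereal (x - c)" by (cases a) auto

lemma coord_step:
  "(z + a *\<^sub>R (g *\<^sub>R (axis pp 1 - axis jj 1))) $ i =
     z $ i + a * g * ((if i = pp then 1 else 0) - (if i = jj then 1 else 0))"
  by (simp add: axis_def)

lemma box_step:
  assumes box: "inbox l u z" and A: "A > 0" and dl: "0 \<le> delta" "delta \<le> 1"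
    and Dl: "Delta = real_of_ereal (min (alpha_bar l u z jj pp g) (ereal A))"
    and al: "alpha = Delta * delta ^ m"
  shows "inbox l u (z + alpha *\<^sub>R (g *\<^sub>R (axis pp 1 - axis jj 1)))"
proof -
  have ab0: "alpha_bar l u z jj pp g \<ge> 0" using ab_nonneg[OF box] .
  have m0: "0 \<le> min (alpha_bar l u z jj pp g) (ereal A)" "min (alpha_bar l u z jj pp g) (ereal A) \<le> ereal A"
      using ab0 A by auto
  have mn: "min (alpha_bar l u z jj pp g) (ereal A) = ereal Delta"
    using m0 unfolding Dl by (cases "min (alpha_bar l u z jj pp g) (ereal A)") auto
  have D0: "0 \<le> Delta" using m0(1) unfolding mn by simp
  have D1: "ereal Delta \<le> alpha_bar l u z jj pp g" unfolding mn[symmetric] by simp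
  have "delta ^ m \<le> 1" "0 \<le> delta ^ m" using dl by (auto simp: power_le_one)
  then have a0: "0 \<le> alpha" and a1: "alpha \<le> Delta" unfolding al using D0
    by (auto simp: mult_left_le)
  have "ereal alpha \<le> ereal Delta" using a1 by simp
  then have aab: "ereal alpha \<le> alpha_bar l u z jj pp g" using D1 by (rule order_trans)
  show ?thesis unfolding inbox_def
  proof
    fix i
    show "l i \<le> ereal ((z + alpha *\<^sub>R (g *\<^sub>R (axis pp 1 - axis jj 1))) $ i) \<and>
          ereal ((z + alpha *\<^sub>R (g *\<^sub>R (axis pp 1 - axis jj 1))) $ i) \<le> u i"
    proof (cases "pp = jj \<or> g = 0")
      case True
      then show ?thesis using box unfolding inbox_def coord_step by auto
    next
      case False
      then have pj: "pp \<noteq> jj" and g0: "g \<noteq> 0" by auto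
      have bz: "l k \<le> ereal (z $ k)" "ereal (z $ k) \<le> u k" for k using box unfolding inbox_def by auto
      show ?thesis
      proof (cases "g > 0")
        case True
        then have "ereal alpha \<le> min (u pp - ereal (z $ pp)) (ereal (z $ jj) - l jj) / ereal g"
          using aab unfolding alpha_bar_def by simp
        from div_bound[OF True a0 this] have
          b1: "ereal (z $ pp + alpha * g) \<le> u pp" and b2: "l jj \<le> ereal (z $ jj - alpha * g)"
          by (auto intro: e4 e5)
        have "alpha * g \<ge> 0" using a0 True by simp
        then have q: "ereal (z $ pp) \<le> ereal (z $ pp + alpha * g)" "ereal (z $ jj - alpha * g) \<le> ereal (z $ jj)"
          by simp_all
        have c1: "l pp \<le> ereal (z $ pp + alpha * g)" "ereal (z $ jj - alpha * g) \<le> u jj"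
          using bz(1)[of pp] q(1) apply (rule order_trans)
          using q(2) bz(2)[of jj] by (rule order_trans)
        show ?thesis unfolding coord_step using pj b1 b2 bz[of i] c1
          by (cases "i = pp"; cases "i = jj") simp_all
      next
        case False
        then have gn: "g < 0" using g0 by simp
        then have ale: "ereal alpha \<le> min (ereal (z $ pp) - l pp) (u jj - ereal (z $ jj)) / ereal \<bar>g\<bar>"
          using aab unfolding alpha_bar_def by simp
        have gp: "\<bar>g\<bar> > 0" using gn by simp
        note H = div_bound[OF gp a0 ale]
        have b1: "l pp \<le> ereal (z $ pp - alpha * \<bar>g\<bar>)" by (rule e5[OF conjunct1[OF H]])
        have b2: "ereal (z $ jj + alpha * \<bar>g\<bar>) \<le> u jj" by (rule e4[OF conjunct2[OF H]])
        have "alpha * \<bar>g\<bar> \<ge> 0" using a0 by simp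
        moreover have "alpha * g = - (alpha * \<bar>g\<bar>)" using gn by simp
        ultimately have q: "z $ pp + alpha * g = z $ pp - alpha * \<bar>g\<bar>" "z $ jj - alpha * g = z $ jj + alpha * \<bar>g\<bar>"
           "ereal (z $ pp + alpha * g) \<le> ereal (z $ pp)" "ereal (z $ jj) \<le> ereal (z $ jj - alpha * g)"
          by simp_all
        have c1: "ereal (z $ pp + alpha * g) \<le> u pp" "l jj \<le> ereal (z $ jj - alpha * g)"
          "l pp \<le> ereal (z $ pp + alpha * g)" "ereal (z $ jj - alpha * g) \<le> u jj"
        proof -
          show "ereal (z $ pp + alpha * g) \<le> u pp" using q(3) bz(2)[of pp] by (rule order_trans)
          show "l jj \<le> ereal (z $ jj - alpha * g)" using bz(1)[of jj] q(4) by (rule order_trans)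
          show "l pp \<le> ereal (z $ pp + alpha * g)" using b1 unfolding q(1) .
          show "ereal (z $ jj - alpha * g) \<le> u jj" using b2 unfolding q(2) .
        qed
        show ?thesis unfolding coord_step using pj bz[of i] c1
          by (cases "i = pp"; cases "i = jj") simp_all
      qed
    qed
  qed
qed

lemma key_lower:
  fixes f :: "real^'n::finite \<Rightarrow> real" and grad :: "real^'n \<Rightarrow> real^'n"
  assumes deriv: "\<forall>y. (f has_derivative (\<lambda>h. grad y \<bullet> h)) (at y)"
    and lipj: "\<forall>s t. \<bar>grad (z + s *\<^sub>R (axis jj 1 - axis h 1)) \<bullet> (axis jj 1 - axis h 1)
         - grad (z + t *\<^sub>R (axis jj 1 - axis h 1)) \<bullet> (axis jj 1 - axis h 1)\<bar> \<le> Lhj * \<bar>s - t\<bar>"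
    and hj: "h \<noteq> jj"
    and box: "inbox l u z"
    and lh: "l h = ereal (xs $ h)"
    and zeta: "zeta \<le> grad xs $ h - lam"
    and gj: "grad xs $ jj = lam"
    and Lgj: "\<bar>grad z $ jj - grad xs $ jj\<bar> \<le> L * r"
    and Lgh: "\<bar>grad z $ h - grad xs $ h\<bar> \<le> L * r"
    and rz: "\<bar>z $ h - xs $ h\<bar> \<le> r"
    and r0: "0 \<le> r" and L0: "0 \<le> L"
    and rD: "r * (2 * L + M) < zeta"
    and M1: "1 / Al \<le> M" and M2: "Lhj / (2 * (1 - gamma)) \<le> M"
    and Al: "0 < Al" "Al \<le> A" and gam: "0 < gamma" "gamma < 1"
    and g: "g = grad z $ jj - grad z $ h"
    and Dl: "Delta = real_of_ereal (min (alpha_bar l u z jj h g) (ereal A))"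
    and alpha: "\<exists>m::nat. alpha = Delta * delta ^ m \<and>
        f (z + alpha *\<^sub>R (g *\<^sub>R (axis h 1 - axis jj 1))) \<le> f z + gamma * alpha * (grad z \<bullet> (g *\<^sub>R (axis h 1 - axis jj 1))) \<and>
        (\<forall>m'<m. \<not> f (z + (Delta * delta ^ m') *\<^sub>R (g *\<^sub>R (axis h 1 - axis jj 1))) \<le> f z + gamma * (Delta * delta ^ m') * (grad z \<bullet> (g *\<^sub>R (axis h 1 - axis jj 1))))"
    and interior: "ereal ((z + alpha *\<^sub>R (g *\<^sub>R (axis h 1 - axis jj 1))) $ jj) < u jj"
  shows "(z + alpha *\<^sub>R (g *\<^sub>R (axis h 1 - axis jj 1))) $ h = xs $ h"
proof -
  have M0: "M > 0" using M1 Al by (smt (verit) divide_pos_pos)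
  have e: "r * (2 * L + M) = 2 * (L * r) + r * M" by (simp add: algebra_simps)
  define G where "G = - g"
  have GrM: "G > r * M" using rD e Lgj Lgh zeta gj unfolding G_def g by linarith
  have rM0: "r * M \<ge> 0" using r0 M0 by simp
  have G0: "G > 0" using GrM rM0 by linarith
  have gneg: "g < 0" using G0 unfolding G_def by simp
  have bz: "l k \<le> ereal (z $ k)" "ereal (z $ k) \<le> u k" for k using box unfolding inbox_def by auto
  define cm where "cm = min (ereal (z $ h - xs $ h)) (u jj - ereal (z $ jj))"
  have ab: "alpha_bar l u z jj h g = cm / ereal G"
    using gneg unfolding alpha_bar_def cm_def G_def lh by simp
  have cm0: "0 \<le> cm" unfolding cm_def using bz[of h] bz[of jj] lh e2 by auto
  have cm1: "cm \<le> ereal (z $ h - xs $ h)" unfolding cm_def by simp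
  obtain c where cmc: "cm = ereal c" using cm0 cm1 by (cases cm) auto
  have c0: "0 \<le> c" and c1: "c \<le> z $ h - xs $ h" using cm0 cm1 cmc by auto
  have cr: "c \<le> r" using c1 rz by linarith
  have cM: "c * M < G" using mult_right_mono[OF cr, of M] M0 GrM by linarith
  have cG1: "c / G < 1 / M" using cM G0 M0 by (simp add: field_simps)
  have MAl: "1 / M \<le> Al" using M1 Al M0 by (simp add: field_simps)
  have abv: "alpha_bar l u z jj h g = ereal (c / G)" unfolding ab cmc using G0 by simp
  have "c / G < A" using cG1 MAl Al(2) by linarith
  then have "min (ereal (c / G)) (ereal A) = ereal (c / G)" by (simp add: min_def)
  then have DG: "Delta = c / G" unfolding Dl abv by simp
  define v :: "real^'n" where "v = axis jj 1 - axis h 1"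
  define d :: "real^'n" where "d = g *\<^sub>R (axis h 1 - axis jj 1)"
  have dv: "Delta *\<^sub>R d = c *\<^sub>R v" unfolding d_def v_def DG G_def using G0
    by (simp add: G_def scaleR_diff_right algebra_simps)
  have gv: "grad z \<bullet> v = - G" unfolding v_def G_def g by (simp add: inner_diff_right inner_axis)
  have gd: "grad z \<bullet> d = - (G * G)" unfolding d_def G_def g by (simp add: inner_diff_right inner_axis algebra_simps)
  have desc: "f (z + c *\<^sub>R v) \<le> f z + c * (grad z \<bullet> v) + Lhj * c^2 / 2"
    using descent[OF deriv _ c0] lipj unfolding v_def by blast
  have armijo: "f (z + Delta *\<^sub>R d) \<le> f z + gamma * Delta * (grad z \<bullet> d)"
  proof -
    have L2: "Lhj \<le> 2 * (1 - gamma) * M" using M2 gam by (simp add: field_simps)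
    have "Lhj * c^2 / 2 \<le> (1 - gamma) * M * c * c"
      using mult_right_mono[OF L2, of "c*c"] c0 by (simp add: power2_eq_square algebra_simps)
    also have "\<dots> \<le> (1 - gamma) * c * G"
    proof -
      have "0 \<le> (1 - gamma) * c" using gam c0 by simp
      from mult_left_mono[OF less_imp_le[OF cM] this] show ?thesis by (simp add: algebra_simps)
    qed
    finally have q: "Lhj * c^2 / 2 \<le> (1 - gamma) * c * G" .
    have "gamma * Delta * (grad z \<bullet> d) = - gamma * c * G" unfolding gd DG using G0 by (simp add: field_simps)
    then show ?thesis using desc q unfolding dv gv by (simp add: algebra_simps)
  qed
  obtain m where m: "alpha = Delta * delta ^ m" "\<forall>m'<m. \<not> f (z + (Delta * delta ^ m') *\<^sub>R d) \<le> f z + gamma * (Delta * delta ^ m') * (grad z \<bullet> d)"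
    using alpha unfolding d_def by blast
  have "m = 0"
  proof (rule ccontr)
    assume "m \<noteq> 0"
    then have "\<not> f (z + (Delta * delta ^ 0) *\<^sub>R d) \<le> f z + gamma * (Delta * delta ^ 0) * (grad z \<bullet> d)"
      using m(2) by blast
    then show False using armijo by simp
  qed
  then have aD: "alpha = Delta" using m(1) by simp
  have ad: "alpha *\<^sub>R (g *\<^sub>R (axis h 1 - axis jj 1)) = c *\<^sub>R v" using dv aD unfolding d_def by simp
  have cj: "(z + c *\<^sub>R v) $ jj = z $ jj + c" and ch: "(z + c *\<^sub>R v) $ h = z $ h - c"
    unfolding v_def using hj by (auto simp: axis_def)
  have "c = z $ h - xs $ h"
  proof (rule ccontr)
    assume ne: "c \<noteq> z $ h - xs $ h"
    have "cm = u jj - ereal (z $ jj)" using ne cmc unfolding cm_def by (auto simp: min_def split: if_splits)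
    then have "u jj = ereal (z $ jj + c)" using cmc by (cases "u jj") auto
    then show False using interior unfolding ad cj by simp
  qed
  then show ?thesis unfolding ad ch by simp
qed

lemma key_upper:
  fixes f :: "real^'n::finite \<Rightarrow> real" and grad :: "real^'n \<Rightarrow> real^'n"
  assumes deriv: "\<forall>y. (f has_derivative (\<lambda>h. grad y \<bullet> h)) (at y)"
    and lipj: "\<forall>s t. \<bar>grad (z + s *\<^sub>R (axis h 1 - axis jj 1)) \<bullet> (axis h 1 - axis jj 1)
         - grad (z + t *\<^sub>R (axis h 1 - axis jj 1)) \<bullet> (axis h 1 - axis jj 1)\<bar> \<le> Lhj * \<bar>s - t\<bar>"
    and hj: "h \<noteq> jj"
    and box: "inbox l u z"
    and lh: "u h = ereal (xs $ h)"
    and zeta: "zeta \<le> lam - grad xs $ h"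
    and gj: "grad xs $ jj = lam"
    and Lgj: "\<bar>grad z $ jj - grad xs $ jj\<bar> \<le> L * r"
    and Lgh: "\<bar>grad z $ h - grad xs $ h\<bar> \<le> L * r"
    and rz: "\<bar>z $ h - xs $ h\<bar> \<le> r"
    and r0: "0 \<le> r" and L0: "0 \<le> L"
    and rD: "r * (2 * L + M) < zeta"
    and M1: "1 / Al \<le> M" and M2: "Lhj / (2 * (1 - gamma)) \<le> M"
    and Al: "0 < Al" "Al \<le> A" and gam: "0 < gamma" "gamma < 1"
    and g: "g = grad z $ jj - grad z $ h"
    and Dl: "Delta = real_of_ereal (min (alpha_bar l u z jj h g) (ereal A))"
    and alpha: "\<exists>m::nat. alpha = Delta * delta ^ m \<and>
        f (z + alpha *\<^sub>R (g *\<^sub>R (axis h 1 - axis jj 1))) \<le> f z + gamma * alpha * (grad z \<bullet> (g *\<^sub>R (axis h 1 - axis jj 1))) \<and>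
        (\<forall>m'<m. \<not> f (z + (Delta * delta ^ m') *\<^sub>R (g *\<^sub>R (axis h 1 - axis jj 1))) \<le> f z + gamma * (Delta * delta ^ m') * (grad z \<bullet> (g *\<^sub>R (axis h 1 - axis jj 1))))"
    and interior: "l jj < ereal ((z + alpha *\<^sub>R (g *\<^sub>R (axis h 1 - axis jj 1))) $ jj)"
  shows "(z + alpha *\<^sub>R (g *\<^sub>R (axis h 1 - axis jj 1))) $ h = xs $ h"
proof -
  have M0: "M > 0" using M1 Al by (smt (verit) divide_pos_pos)
  have e: "r * (2 * L + M) = 2 * (L * r) + r * M" by (simp add: algebra_simps)
  define G where "G = g"
  have GrM: "G > r * M" using rD e Lgj Lgh zeta gj unfolding G_def g by linarith
  have rM0: "r * M \<ge> 0" using r0 M0 by simp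
  have G0: "G > 0" using GrM rM0 by linarith
  have gneg: "g > 0" using G0 unfolding G_def by simp
  have bz: "l k \<le> ereal (z $ k)" "ereal (z $ k) \<le> u k" for k using box unfolding inbox_def by auto
  define cm where "cm = min (ereal (xs $ h - z $ h)) (ereal (z $ jj) - l jj)"
  have ab: "alpha_bar l u z jj h g = cm / ereal G"
    using gneg unfolding alpha_bar_def cm_def G_def lh by simp
  have cm0: "0 \<le> cm" unfolding cm_def using bz[of h] bz[of jj] lh e1 by auto
  have cm1: "cm \<le> ereal (xs $ h - z $ h)" unfolding cm_def by simp
  obtain c where cmc: "cm = ereal c" using cm0 cm1 by (cases cm) auto
  have c0: "0 \<le> c" and c1: "c \<le> xs $ h - z $ h" using cm0 cm1 cmc by auto
  have cr: "c \<le> r" using c1 rz by linarith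
  have cM: "c * M < G" using mult_right_mono[OF cr, of M] M0 GrM by linarith
  have cG1: "c / G < 1 / M" using cM G0 M0 by (simp add: field_simps)
  have MAl: "1 / M \<le> Al" using M1 Al M0 by (simp add: field_simps)
  have abv: "alpha_bar l u z jj h g = ereal (c / G)" unfolding ab cmc using G0 by simp
  have "c / G < A" using cG1 MAl Al(2) by linarith
  then have "min (ereal (c / G)) (ereal A) = ereal (c / G)" by (simp add: min_def)
  then have DG: "Delta = c / G" unfolding Dl abv by simp
  define v :: "real^'n" where "v = axis h 1 - axis jj 1"
  define d :: "real^'n" where "d = g *\<^sub>R (axis h 1 - axis jj 1)"
  have dv: "Delta *\<^sub>R d = c *\<^sub>R v" unfolding d_def v_def DG G_def using G0
    by (simp add: G_def scaleR_diff_right algebra_simps)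
  have gv: "grad z \<bullet> v = - G" unfolding v_def G_def g by (simp add: inner_diff_right inner_axis)
  have gd: "grad z \<bullet> d = - (G * G)" unfolding d_def G_def g by (simp add: inner_diff_right inner_axis algebra_simps)
  have desc: "f (z + c *\<^sub>R v) \<le> f z + c * (grad z \<bullet> v) + Lhj * c^2 / 2"
    using descent[OF deriv _ c0] lipj unfolding v_def by blast
  have armijo: "f (z + Delta *\<^sub>R d) \<le> f z + gamma * Delta * (grad z \<bullet> d)"
  proof -
    have L2: "Lhj \<le> 2 * (1 - gamma) * M" using M2 gam by (simp add: field_simps)
    have "Lhj * c^2 / 2 \<le> (1 - gamma) * M * c * c"
      using mult_right_mono[OF L2, of "c*c"] c0 by (simp add: power2_eq_square algebra_simps)
    also have "\<dots> \<le> (1 - gamma) * c * G"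
    proof -
      have "0 \<le> (1 - gamma) * c" using gam c0 by simp
      from mult_left_mono[OF less_imp_le[OF cM] this] show ?thesis by (simp add: algebra_simps)
    qed
    finally have q: "Lhj * c^2 / 2 \<le> (1 - gamma) * c * G" .
    have "gamma * Delta * (grad z \<bullet> d) = - gamma * c * G" unfolding gd DG using G0 by (simp add: field_simps)
    then show ?thesis using desc q unfolding dv gv by (simp add: algebra_simps)
  qed
  obtain m where m: "alpha = Delta * delta ^ m" "\<forall>m'<m. \<not> f (z + (Delta * delta ^ m') *\<^sub>R d) \<le> f z + gamma * (Delta * delta ^ m') * (grad z \<bullet> d)"
    using alpha unfolding d_def by blast
  have "m = 0"
  proof (rule ccontr)
    assume "m \<noteq> 0"
    then have "\<not> f (z + (Delta * delta ^ 0) *\<^sub>R d) \<le> f z + gamma * (Delta * delta ^ 0) * (grad z \<bullet> d)"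
      using m(2) by blast
    then show False using armijo by simp
  qed
  then have aD: "alpha = Delta" using m(1) by simp
  have ad: "alpha *\<^sub>R (g *\<^sub>R (axis h 1 - axis jj 1)) = c *\<^sub>R v" using dv aD unfolding d_def by simp
  have cj: "(z + c *\<^sub>R v) $ jj = z $ jj - c" and ch: "(z + c *\<^sub>R v) $ h = z $ h + c"
    unfolding v_def using hj by (auto simp: axis_def)
  have "c = xs $ h - z $ h"
  proof (rule ccontr)
    assume ne: "c \<noteq> xs $ h - z $ h"
    have "cm = ereal (z $ jj) - l jj" using ne cmc unfolding cm_def by (auto simp: min_def split: if_splits)
    then have "l jj = ereal (z $ jj - c)" using cmc by (cases "l jj") auto
    then show False using interior unfolding ad cj by simp
  qed
  then show ?thesis unfolding ad ch by simp
qed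

theorem theorem1:
  fixes f :: "real^'n \<Rightarrow> real" and grad :: "real^'n \<Rightarrow> real^'n"
    and l u :: "'n \<Rightarrow> ereal" and b L :: real and Lij :: "'n \<Rightarrow> 'n \<Rightarrow> real"
    and tau gamma delta Al Au :: real
    and x :: "nat \<Rightarrow> real^'n" and z :: "nat \<Rightarrow> nat \<Rightarrow> real^'n"
    and j :: "nat \<Rightarrow> 'n" and p :: "nat \<Rightarrow> nat \<Rightarrow> 'n" and A alpha :: "nat \<Rightarrow> nat \<Rightarrow> real"
    and xs :: "real^'n" and lam :: real and kA kj kz :: nat
  assumes n2: "CARD('n) \<ge> 2"
    and l_fin: "\<forall>i. l i \<noteq> \<infinity>" and u_fin: "\<forall>i. u i \<noteq> -\<infinity>" and lu: "\<forall>i. l i < u i"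
    and deriv: "\<forall>y. (f has_derivative (\<lambda>h. grad y \<bullet> h)) (at y)"
    and lipschitz: "\<forall>y w. norm (grad y - grad w) \<le> L * norm (y - w)"
    and Lij_pos: "\<forall>i k. i \<noteq> k \<longrightarrow> Lij i k > 0" and Lij_diag: "\<forall>i. Lij i i = 0"
    and Lij_lip: "\<forall>i k y s t. i \<noteq> k \<longrightarrow>
        \<bar>grad (y + s *\<^sub>R (axis i 1 - axis k 1)) \<bullet> (axis i 1 - axis k 1)
         - grad (y + t *\<^sub>R (axis i 1 - axis k 1)) \<bullet> (axis i 1 - axis k 1)\<bar> \<le> Lij i k * \<bar>s - t\<bar>"
    and params: "0 < tau" "tau \<le> 1" "0 < gamma" "gamma < 1" "0 < delta" "delta < 1" "0 < Al" "Al \<le> Au"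
    and alg: "ac2cd f grad l u b tau gamma delta Al Au x z j p A alpha"
    and L0_ne: "{y. feasible l u b y \<and> f y \<le> f (x 0)} \<noteq> {}"
    and L0_compact: "compact {y. feasible l u b y \<and> f y \<le> f (x 0)}"
    and L0_free: "\<forall>y\<in>{y. feasible l u b y \<and> f y \<le> f (x 0)}. \<exists>i. l i < ereal (y $ i) \<and> ereal (y $ i) < u i"
    and conv: "x \<longlonglongrightarrow> xs"
    and stat: "stationary grad l u b xs lam"
    and Aplus_ne: "active_plus grad l u xs lam \<noteq> {}"
    and kA: "\<forall>k\<ge>kA. \<forall>i\<in>{1..CARD('n)}. norm (z k i - xs) <
          Min ((\<lambda>i. \<bar>grad xs $ i - lam\<bar>) ` active_plus grad l u xs lam)
          / (2 * L + max (1 / Al) (Max {Lij i k | i k. True} / (2 * (1 - gamma))))"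
    and kA_first: "\<forall>k'<kA. \<not> (\<forall>k\<ge>k'. \<forall>i\<in>{1..CARD('n)}. norm (z k i - xs) <
          Min ((\<lambda>i. \<bar>grad xs $ i - lam\<bar>) ` active_plus grad l u xs lam)
          / (2 * L + max (1 / Al) (Max {Lij i k | i k. True} / (2 * (1 - gamma)))))"
    and kj: "\<forall>k\<ge>kj. j k \<notin> active_set l u xs"
    and kj_first: "\<forall>k'<kj. \<not> (\<forall>k\<ge>k'. j k \<notin> active_set l u xs)"
    and kz: "\<forall>k\<ge>kz. \<forall>i\<in>{1..CARD('n)+1}. l (j k) < ereal (z k i $ j k) \<and> ereal (z k i $ j k) < u (j k)"
    and kz_first: "\<forall>k'<kz. \<not> (\<forall>k\<ge>k'. \<forall>i\<in>{1..CARD('n)+1}. l (j k) < ereal (z k i $ j k) \<and> ereal (z k i $ j k) < u (j k))"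
    and order: "kA \<ge> max kj kz"
  shows "\<forall>k>kA. \<forall>h\<in>active_plus grad l u xs lam. x k $ h = xs $ h"
proof -
  let ?n = "CARD('n)"
  have feas0: "feasible l u b (x 0)" using alg unfolding ac2cd_def by blast
  have algk: "bij_betw (p k) {1..?n} UNIV \<and> z k 1 = x k \<and>
        (\<forall>i\<in>{1..?n}.
           let g = grad (z k i) $ j k - grad (z k i) $ p k i;
               d = g *\<^sub>R (axis (p k i) 1 - axis (j k) 1);
               Delta = real_of_ereal (min (alpha_bar l u (z k i) (j k) (p k i) g) (ereal (A k i)));
               armijo = (\<lambda>a. f (z k i + a *\<^sub>R d) \<le> f (z k i) + gamma * a * (grad (z k i) \<bullet> d))
           in A k i \<in> {Al..Au} \<and>
              (\<exists>m::nat. alpha k i = Delta * delta ^ m \<and> armijo (alpha k i) \<and>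
                  (\<forall>m'<m. \<not> armijo (Delta * delta ^ m'))) \<and>
              z k (Suc i) = z k i + alpha k i *\<^sub>R d) \<and>
        x (Suc k) = z k (?n + 1)" for k
    using alg unfolding ac2cd_def by blast
  have step: "A k i \<in> {Al..Au} \<and>
      (\<exists>m::nat. alpha k i = real_of_ereal (min (alpha_bar l u (z k i) (j k) (p k i) (grad (z k i) $ j k - grad (z k i) $ p k i)) (ereal (A k i))) * delta ^ m \<and>
         f (z k i + alpha k i *\<^sub>R ((grad (z k i) $ j k - grad (z k i) $ p k i) *\<^sub>R (axis (p k i) 1 - axis (j k) 1))) \<le> f (z k i) + gamma * alpha k i * (grad (z k i) \<bullet> ((grad (z k i) $ j k - grad (z k i) $ p k i) *\<^sub>R (axis (p k i) 1 - axis (j k) 1))) \<and>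
         (\<forall>m'<m. \<not> f (z k i + (real_of_ereal (min (alpha_bar l u (z k i) (j k) (p k i) (grad (z k i) $ j k - grad (z k i) $ p k i)) (ereal (A k i))) * delta ^ m') *\<^sub>R ((grad (z k i) $ j k - grad (z k i) $ p k i) *\<^sub>R (axis (p k i) 1 - axis (j k) 1))) \<le> f (z k i) + gamma * (real_of_ereal (min (alpha_bar l u (z k i) (j k) (p k i) (grad (z k i) $ j k - grad (z k i) $ p k i)) (ereal (A k i))) * delta ^ m') * (grad (z k i) \<bullet> ((grad (z k i) $ j k - grad (z k i) $ p k i) *\<^sub>R (axis (p k i) 1 - axis (j k) 1))))) \<and>
      z k (Suc i) = z k i + alpha k i *\<^sub>R ((grad (z k i) $ j k - grad (z k i) $ p k i) *\<^sub>R (axis (p k i) 1 - axis (j k) 1))"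
    if "i \<in> {1..?n}" for k i
    using algk[of k] that unfolding Let_def by blast
  have boxz: "inbox l u (z k i)" if "inbox l u (x k)" "i \<in> {1..?n+1}" for k i
    using that(2)
  proof (induction i)
    case 0 then show ?case by simp
  next
    case (Suc i)
    show ?case
    proof (cases "i = 0")
      case True then show ?thesis using algk[of k] that(1) by simp
    next
      case False
      then have hi: "i \<in> {1..?n}" and hi1: "i \<in> {1..?n+1}" using Suc.prems by auto
      have bi: "inbox l u (z k i)" using Suc.IH[OF hi1] .
      from step[OF hi] obtain m where
        al: "alpha k i = real_of_ereal (min (alpha_bar l u (z k i) (j k) (p k i) (grad (z k i) $ j k - grad (z k i) $ p k i)) (ereal (A k i))) * delta ^ m"
        and zs: "z k (Suc i) = z k i + alpha k i *\<^sub>R ((grad (z k i) $ j k - grad (z k i) $ p k i) *\<^sub>R (axis (p k i) 1 - axis (j k) 1))"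
        and Ak: "A k i \<in> {Al..Au}"
        by blast
      have "A k i > 0" using Ak params by auto
      from box_step[OF bi this _ _ refl al] params show ?thesis unfolding zs by simp
    qed
  qed
  have boxx: "inbox l u (x k)" for k
  proof (induction k)
    case 0 then show ?case using feas0 unfolding feasible_def inbox_def by simp
  next
    case (Suc k)
    then show ?case using boxz[OF Suc, of "?n+1"] algk[of k] by simp
  qed
  define Lmax where "Lmax = Max {Lij i k | i k. True}"
  define M where "M = max (1 / Al) (Lmax / (2 * (1 - gamma)))"
  define Zt where "Zt = Min ((\<lambda>i. \<bar>grad xs $ i - lam\<bar>) ` active_plus grad l u xs lam)"
  have finL: "finite {Lij i k | i k. True}"
  proof -
    have "{Lij i k | i k. True} = (\<lambda>(i, k). Lij i k) ` UNIV" by auto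
    then show ?thesis by simp
  qed
  have Lle: "Lij a c \<le> Lmax" for a c unfolding Lmax_def using finL by (intro Max_ge) auto
  have M1: "1 / Al \<le> M" unfolding M_def by simp
  have M2: "Lij a c / (2 * (1 - gamma)) \<le> M" for a c
  proof -
    have "Lij a c / (2 * (1 - gamma)) \<le> Lmax / (2 * (1 - gamma))"
      using Lle[of a c] params by (intro divide_right_mono) auto
    then show ?thesis unfolding M_def by simp
  qed
  have L0: "0 \<le> L"
  proof -
    fix a :: 'n
    have "norm (grad (axis a 1) - grad 0) \<le> L * norm (axis a (1::real) - 0)" using lipschitz by blast
    then show ?thesis by simp (meson norm_ge_zero order_trans)
  qed
  have M0: "0 < M" unfolding M_def using params by (simp add: less_max_iff_disj)
  have Dpos: "0 < 2 * L + M" using L0 M0 by simp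
  have Zt_le: "Zt \<le> \<bar>grad xs $ h - lam\<bar>" if "h \<in> active_plus grad l u xs lam" for h
    unfolding Zt_def using that by (intro Min_le) auto
  have feasxs: "l i \<le> ereal (xs $ i) \<and> ereal (xs $ i) \<le> u i" for i
    using stat unfolding stationary_def feasible_def by blast
  have kA': "norm (z k i - xs) * (2 * L + M) < Zt" if "k \<ge> kA" "i \<in> {1..?n}" for k i
  proof -
    have "norm (z k i - xs) < Zt / (2 * L + M)" using kA that unfolding Zt_def M_def Lmax_def by blast
    then show ?thesis using Dpos by (simp add: field_simps)
  qed
  have final: "z k (?n + 1) $ h = xs $ h" if k: "k \<ge> kA" and hA: "h \<in> active_plus grad l u xs lam" for k h
  proof -
    let ?jj = "j k"
    have jna: "?jj \<notin> active_set l u xs" using kj k order by auto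
    then have jint: "l ?jj < ereal (xs $ ?jj) \<and> ereal (xs $ ?jj) < u ?jj"
      using feasxs[of ?jj] unfolding active_set_def by (auto simp: order.order_iff_strict)
    then have gj: "grad xs $ ?jj = lam" using stat unfolding stationary_def by blast
    have hact: "h \<in> active_set l u xs" and hne: "grad xs $ h \<noteq> lam" using hA unfolding active_plus_def by auto
    have hj: "h \<noteq> ?jj" using hact jna by auto
    have one: "z k (Suc i) $ h = xs $ h" if hi: "i \<in> {1..?n}" and ph: "p k i = h" for i
    proof -
      define r where "r = norm (z k i - xs)"
      have Lg: "\<bar>grad (z k i) $ a - grad xs $ a\<bar> \<le> L * r" for a
      proof -
        have "\<bar>grad (z k i) $ a - grad xs $ a\<bar> \<le> norm (grad (z k i) - grad xs)"
          using component_le_norm_cart[of "grad (z k i) - grad xs" a] by simp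
        also have "\<dots> \<le> L * r" unfolding r_def using lipschitz by blast
        finally show ?thesis .
      qed
      have rz: "\<bar>z k i $ h - xs $ h\<bar> \<le> r" unfolding r_def
        using component_le_norm_cart[of "z k i - xs" h] by simp
      have r0: "0 \<le> r" unfolding r_def by simp
      have rD: "r * (2 * L + M) < Zt" unfolding r_def using kA'[OF k hi] .
      have bi: "inbox l u (z k i)" using boxz[OF boxx, of i k] hi by auto
      have kzk: "k \<ge> kz" using k order by auto
      have int: "l ?jj < ereal (z k (Suc i) $ ?jj) \<and> ereal (z k (Suc i) $ ?jj) < u ?jj"
      proof -
        have "Suc i \<in> {1..?n+1}" using hi by auto
        then show ?thesis using kz kzk by blast
      qed
      from step[OF hi] obtain Ak: "A k i \<in> {Al..Au}" and
        ex: "\<exists>m::nat. alpha k i = real_of_ereal (min (alpha_bar l u (z k i) (j k) h (grad (z k i) $ j k - grad (z k i) $ h)) (ereal (A k i))) * delta ^ m \<and>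
         f (z k i + alpha k i *\<^sub>R ((grad (z k i) $ j k - grad (z k i) $ h) *\<^sub>R (axis h 1 - axis (j k) 1))) \<le> f (z k i) + gamma * alpha k i * (grad (z k i) \<bullet> ((grad (z k i) $ j k - grad (z k i) $ h) *\<^sub>R (axis h 1 - axis (j k) 1))) \<and>
         (\<forall>m'<m. \<not> f (z k i + (real_of_ereal (min (alpha_bar l u (z k i) (j k) h (grad (z k i) $ j k - grad (z k i) $ h)) (ereal (A k i))) * delta ^ m') *\<^sub>R ((grad (z k i) $ j k - grad (z k i) $ h) *\<^sub>R (axis h 1 - axis (j k) 1))) \<le> f (z k i) + gamma * (real_of_ereal (min (alpha_bar l u (z k i) (j k) h (grad (z k i) $ j k - grad (z k i) $ h)) (ereal (A k i))) * delta ^ m') * (grad (z k i) \<bullet> ((grad (z k i) $ j k - grad (z k i) $ h) *\<^sub>R (axis h 1 - axis (j k) 1))))"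
        and zs: "z k (Suc i) = z k i + alpha k i *\<^sub>R ((grad (z k i) $ j k - grad (z k i) $ h) *\<^sub>R (axis h 1 - axis (j k) 1))"
        using ph by blast
      have AlA: "Al \<le> A k i" using Ak by simp
      have hcase: "ereal (xs $ h) = l h \<or> ereal (xs $ h) = u h" using hact unfolding active_set_def by auto
      then show ?thesis
      proof
        assume lh: "ereal (xs $ h) = l h"
        then have "grad xs $ h \<ge> lam" using stat unfolding stationary_def by blast
        then have zeta: "Zt \<le> grad xs $ h - lam" using Zt_le[OF hA] by simp
        have lip: "\<forall>s t. \<bar>grad (z k i + s *\<^sub>R (axis ?jj 1 - axis h 1)) \<bullet> (axis ?jj 1 - axis h 1)
         - grad (z k i + t *\<^sub>R (axis ?jj 1 - axis h 1)) \<bullet> (axis ?jj 1 - axis h 1)\<bar> \<le> Lij ?jj h * \<bar>s - t\<bar>"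
          using Lij_lip hj[symmetric] by blast
        show ?thesis unfolding zs
          by (rule key_lower[OF deriv lip hj bi lh[symmetric] zeta gj Lg Lg rz r0 L0 rD M1 M2
                params(7) AlA params(3) params(4) refl refl ex]) (rule conjunct2[OF int[unfolded zs]])
      next
        assume uh: "ereal (xs $ h) = u h"
        then have "grad xs $ h \<le> lam" using stat unfolding stationary_def by blast
        then have zeta: "Zt \<le> lam - grad xs $ h" using Zt_le[OF hA] by simp
        have lip: "\<forall>s t. \<bar>grad (z k i + s *\<^sub>R (axis h 1 - axis ?jj 1)) \<bullet> (axis h 1 - axis ?jj 1)
         - grad (z k i + t *\<^sub>R (axis h 1 - axis ?jj 1)) \<bullet> (axis h 1 - axis ?jj 1)\<bar> \<le> Lij h ?jj * \<bar>s - t\<bar>"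
          using Lij_lip hj by blast
        show ?thesis unfolding zs
          by (rule key_upper[OF deriv lip hj bi uh[symmetric] zeta gj Lg Lg rz r0 L0 rD M1 M2
                params(7) AlA params(3) params(4) refl refl ex]) (rule conjunct1[OF int[unfolded zs]])
      qed
    qed
    have other: "z k (Suc i) $ h = z k i $ h" if hi: "i \<in> {1..?n}" and ph: "p k i \<noteq> h" for i
    proof -
      have zs: "z k (Suc i) = z k i + alpha k i *\<^sub>R ((grad (z k i) $ j k - grad (z k i) $ p k i) *\<^sub>R (axis (p k i) 1 - axis (j k) 1))"
        using step[OF hi] by blast
      show ?thesis unfolding zs coord_step using ph hj by simp
    qed
    obtain i0 where i0: "i0 \<in> {1..?n}" "p k i0 = h"
      using algk[of k] unfolding bij_betw_def by (metis UNIV_I imageE)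
    have "\<forall>m. i0 + 1 + m \<le> ?n + 1 \<longrightarrow> z k (i0 + 1 + m) $ h = xs $ h"
    proof
      fix m show "i0 + 1 + m \<le> ?n + 1 \<longrightarrow> z k (i0 + 1 + m) $ h = xs $ h"
      proof (induction m)
        case 0 then show ?case using one[OF i0] by simp
      next
        case (Suc m)
        show ?case
        proof
          assume le: "i0 + 1 + Suc m \<le> ?n + 1"
          then have IH: "z k (i0 + 1 + m) $ h = xs $ h" using Suc by simp
          have hi: "i0 + 1 + m \<in> {1..?n}" using le by auto
          show "z k (i0 + 1 + Suc m) $ h = xs $ h"
          proof (cases "p k (i0 + 1 + m) = h")
            case True then show ?thesis using one[OF hi True] by simp
          next
            case False then show ?thesis using other[OF hi False] IH by simp
          qed
        qed
      qed
    qed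
    moreover have "i0 + 1 + (?n - i0) = ?n + 1" using i0(1) by simp
    ultimately show ?thesis by (metis order_refl)
  qed
  show ?thesis
  proof (intro allI impI ballI)
    fix k h assume k: "kA < k" and h: "h \<in> active_plus grad l u xs lam"
    obtain k0 where k0: "k = Suc k0" using k by (cases k) auto
    have "x k = z k0 (?n + 1)" using algk[of k0] k0 by simp
    then show "x k $ h = xs $ h" using final[OF _ h, of k0] k k0 by simp
  qed
qed

end
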